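(* Let $L$ be a finite set of axis-aligned line segments in the plane, let $\mathcal{C}$ be the collection of associated subsets of the rectangular cells of the arrangement of $L$, and let $k\ge 0$ be an integer. Let $\mathcal{C}_1$ be obtained from $\mathcal{C}$ by, for every pair of segments $\ell,\ell'$ both contained in more than $2k$ subsets of $\mathcal{C}$, adding the subset $\{\ell,\ell'\}$ and removing all subsets containing both $\ell$ and $\ell'$. Let $\mathcal{C}_2$ be obtained from $\mathcal{C}_1$ by, for each segment $\ell$ contained in more than $2k^2$ subsets of $\mathcal{C}_1$, replacing all these subsets by the subset $\{\ell\}$. Then a set $L'\subseteq L$ with $|L'| \le k$ is a minimum-size cover of $\mathcal{C}_1$ if and only if it is a minimum-size cover of $\mathcal{C}_2$.
   Context: A cell of the arrangement of $L$ is a maximal connected region of the plane not intersected by any segment of $L$. A cell is rectangular if its boundary is formed by exactly four segments of $L$; its associated subset is the set of these four bounding segments. A set $L'\subseteq L$ is a cover of a collection $\mathcal{D}$ of subsets of $L$ if every member of $\mathcal{D}$ contains at least one element of $L'$. *)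

theory Defs
  imports "HOL-Analysis.Analysis"
begin

type_synonym point = "real \<times> real"
type_synonym seg = "point set"

definition axis_segment :: "seg \<Rightarrow> bool" where
  "axis_segment s \<longleftrightarrow> (\<exists>a b. a \<noteq> b \<and> (fst a = fst b \<or> snd a = snd b) \<and> s = closed_segment a b)"

definition cell :: "seg set \<Rightarrow> point set \<Rightarrow> bool" where
  "cell L C \<longleftrightarrow> C \<in> components (- \<Union>L)"

text \<open>Segments forming the boundary of a cell: those sharing a non-degenerate piece with it.\<close>
definition bounding_segs :: "seg set \<Rightarrow> point set \<Rightarrow> seg set" where
  "bounding_segs L C = {l \<in> L. infinite (l \<inter> frontier C)}"

definition rect_cell :: "seg set \<Rightarrow> point set \<Rightarrow> bool" where
  "rect_cell L C \<longleftrightarrow> cell L C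
     \<and> (\<exists>a b c d. a < c \<and> b < d \<and> C = {(x, y). a < x \<and> x < c \<and> b < y \<and> y < d})
     \<and> frontier C \<subseteq> \<Union>(bounding_segs L C)
     \<and> card (bounding_segs L C) = 4"

definition rect_subsets :: "seg set \<Rightarrow> seg set set" where
  "rect_subsets L = bounding_segs L ` {C. rect_cell L C}"

definition heavy_pairs :: "nat \<Rightarrow> seg set \<Rightarrow> seg set set \<Rightarrow> seg set set" where
  "heavy_pairs k L D = {{l, l'} | l l'. l \<in> L \<and> l' \<in> L \<and> l \<noteq> l'
                          \<and> card {S \<in> D. l \<in> S \<and> l' \<in> S} > 2 * k}"

definition reduce1 :: "nat \<Rightarrow> seg set \<Rightarrow> seg set set \<Rightarrow> seg set set" where
  "reduce1 k L D = {S \<in> D. \<not> (\<exists>P \<in> heavy_pairs k L D. P \<subseteq> S)} \<union> heavy_pairs k L D"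

definition heavy_segs :: "nat \<Rightarrow> seg set \<Rightarrow> seg set set \<Rightarrow> seg set" where
  "heavy_segs k L D = {l \<in> L. card {S \<in> D. l \<in> S} > 2 * k^2}"

definition reduce2 :: "nat \<Rightarrow> seg set \<Rightarrow> seg set set \<Rightarrow> seg set set" where
  "reduce2 k L D = {S \<in> D. S \<inter> heavy_segs k L D = {}} \<union> {{l} | l. l \<in> heavy_segs k L D}"

definition is_cover :: "seg set \<Rightarrow> seg set set \<Rightarrow> seg set \<Rightarrow> bool" where
  "is_cover L D L' \<longleftrightarrow> L' \<subseteq> L \<and> (\<forall>S \<in> D. S \<inter> L' \<noteq> {})"

definition is_min_cover :: "seg set \<Rightarrow> seg set set \<Rightarrow> seg set \<Rightarrow> bool" where
  "is_min_cover L D L' \<longleftrightarrow> is_cover L D L' \<and> (\<forall>L''. is_cover L D L'' \<longrightarrow> card L' \<le> card L'')"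

end

theory Submission
  imports Defs
begin

lemma reduce1_Pow:
  assumes "D \<subseteq> Pow L" shows "reduce1 k L D \<subseteq> Pow L"
  using assms unfolding reduce1_def heavy_pairs_def by auto

lemma pair_bound:
  assumes fin: "finite L" and D: "D \<subseteq> Pow L" and l: "l \<in> L" and m: "m \<in> L"
    and lm: "l \<noteq> m" and k: "k \<ge> 1"
  shows "card {S \<in> reduce1 k L D. l \<in> S \<and> m \<in> S} \<le> 2 * k"
proof -
  have finP: "finite (Pow L)" using fin by simp
  have pe: "P = {l, m}" if "P \<in> heavy_pairs k L D" "l \<in> P" "m \<in> P" for P
    using that lm unfolding heavy_pairs_def by auto
  show ?thesis
  proof (cases "{l, m} \<in> heavy_pairs k L D")
    case True
    have "{S \<in> reduce1 k L D. l \<in> S \<and> m \<in> S} \<subseteq> {{l, m}}"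
    proof
      fix S assume S: "S \<in> {S \<in> reduce1 k L D. l \<in> S \<and> m \<in> S}"
      have "S \<in> heavy_pairs k L D"
      proof (rule ccontr)
        assume "S \<notin> heavy_pairs k L D"
        then have "\<not> (\<exists>P \<in> heavy_pairs k L D. P \<subseteq> S)" using S unfolding reduce1_def by blast
        moreover have "{l, m} \<subseteq> S" using S by blast
        ultimately show False using True by blast
      qed
      then have "S = {l, m}" using pe S by blast
      then show "S \<in> {{l, m}}" by simp
    qed
    then have "card {S \<in> reduce1 k L D. l \<in> S \<and> m \<in> S} \<le> card {{l,m}}"
      by (intro card_mono) auto
    then show ?thesis using k by simp
  next
    case False
    have nh: "\<not> card {S \<in> D. l \<in> S \<and> m \<in> S} > 2 * k"
      using False l m lm unfolding heavy_pairs_def by blast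
    have "{S \<in> reduce1 k L D. l \<in> S \<and> m \<in> S} \<subseteq> {S \<in> D. l \<in> S \<and> m \<in> S}"
    proof
      fix S assume S: "S \<in> {S \<in> reduce1 k L D. l \<in> S \<and> m \<in> S}"
      have "S \<notin> heavy_pairs k L D"
      proof
        assume "S \<in> heavy_pairs k L D"
        then have "S = {l, m}" using pe S by blast
        then show False using False \<open>S \<in> heavy_pairs k L D\<close> by simp
      qed
      then show "S \<in> {S \<in> D. l \<in> S \<and> m \<in> S}" using S unfolding reduce1_def by blast
    qed
    moreover have "finite {S \<in> D. l \<in> S \<and> m \<in> S}"
    proof (rule finite_subset[OF _ finP])
      show "{S \<in> D. l \<in> S \<and> m \<in> S} \<subseteq> Pow L" using D by blast
    qed
    ultimately have "card {S \<in> reduce1 k L D. l \<in> S \<and> m \<in> S} \<le> card {S \<in> D. l \<in> S \<and> m \<in> S}"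
      by (intro card_mono)
    then show ?thesis using nh by simp
  qed
qed

lemma heavy_in_cover:
  assumes fin: "finite L" and D: "D \<subseteq> Pow L"
    and cov: "is_cover L (reduce1 k L D) L2" and c: "card L2 \<le> k"
    and h: "l \<in> heavy_segs k L (reduce1 k L D)"
  shows "l \<in> L2"
proof (rule ccontr)
  assume nl: "l \<notin> L2"
  let ?C = "reduce1 k L D"
  have L2L: "L2 \<subseteq> L" using cov unfolding is_cover_def by auto
  have fin2: "finite L2" using L2L fin finite_subset by blast
  have lL: "l \<in> L" and big: "card {S \<in> ?C. l \<in> S} > 2 * k^2"
    using h unfolding heavy_segs_def by auto
  have sub: "{S \<in> ?C. l \<in> S} \<subseteq> (\<Union>m\<in>L2. {S \<in> ?C. l \<in> S \<and> m \<in> S})"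
    using cov unfolding is_cover_def by blast
  show False
  proof (cases "k = 0")
    case True
    then have "L2 = {}" using c fin2 by simp
    then have e: "{S \<in> ?C. l \<in> S} = {}" using sub by auto
    have "card {S \<in> ?C. l \<in> S} = 0" by (subst e) simp
    then show False using big by linarith
  next
    case False
    have finU: "finite (\<Union>m\<in>L2. {S \<in> ?C. l \<in> S \<and> m \<in> S})"
    proof -
      have "(\<Union>m\<in>L2. {S \<in> ?C. l \<in> S \<and> m \<in> S}) \<subseteq> Pow L"
        using reduce1_Pow[OF D] by auto
      then show ?thesis using fin finite_subset by blast
    qed
    have "card {S \<in> ?C. l \<in> S} \<le> card (\<Union>m\<in>L2. {S \<in> ?C. l \<in> S \<and> m \<in> S})"
      using sub finU by (intro card_mono)
    also have "\<dots> \<le> (\<Sum>m\<in>L2. card {S \<in> ?C. l \<in> S \<and> m \<in> S})"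
      by (rule card_UN_le[OF fin2])
    also have "\<dots> \<le> (\<Sum>m\<in>L2. 2 * k)"
    proof (rule sum_mono)
      fix m assume mL2: "m \<in> L2"
      have a: "m \<in> L" using mL2 L2L by blast
      have b: "l \<noteq> m" using mL2 nl by blast
      have c: "1 \<le> k" using False by simp
      show "card {S \<in> ?C. l \<in> S \<and> m \<in> S} \<le> 2 * k"
        by (rule pair_bound[OF fin D lL a b c])
    qed
    also have "\<dots> = card L2 * (2 * k)" by simp
    also have "\<dots> \<le> k * (2 * k)" using c by simp
    also have "\<dots> = 2 * k^2" by (simp add: power2_eq_square)
    finally show False using big by simp
  qed
qed

lemma cover2_cover1:
  assumes "is_cover L (reduce2 k L C) L2" shows "is_cover L C L2"
proof -
  have "L2 \<subseteq> L" using assms unfolding is_cover_def by blast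
  moreover have "S \<inter> L2 \<noteq> {}" if S: "S \<in> C" for S
  proof (cases "S \<inter> heavy_segs k L C = {}")
    case True
    then have "S \<in> reduce2 k L C" using S unfolding reduce2_def by blast
    then show ?thesis using assms unfolding is_cover_def by blast
  next
    case False
    then obtain l where l: "l \<in> S" "l \<in> heavy_segs k L C" by blast
    then have "{l} \<in> reduce2 k L C" unfolding reduce2_def by blast
    then have "{l} \<inter> L2 \<noteq> {}" using assms unfolding is_cover_def by blast
    then show ?thesis using l by blast
  qed
  ultimately show ?thesis unfolding is_cover_def by blast
qed

lemma cover1_cover2:
  assumes fin: "finite L" and D: "D \<subseteq> Pow L"
    and cov: "is_cover L (reduce1 k L D) L2" and c: "card L2 \<le> k"
  shows "is_cover L (reduce2 k L (reduce1 k L D)) L2"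
proof -
  have "\<forall>l \<in> heavy_segs k L (reduce1 k L D). l \<in> L2"
    using heavy_in_cover[OF fin D cov c] by blast
  then show ?thesis using cov unfolding is_cover_def reduce2_def by blast
qed

theorem lemma4:
  fixes L L' :: "seg set" and k :: nat
  assumes "finite L"
    and "\<forall>l \<in> L. axis_segment l"
    and "L' \<subseteq> L"
    and "card L' \<le> k"
  shows "is_min_cover L (reduce1 k L (rect_subsets L)) L'
     \<longleftrightarrow> is_min_cover L (reduce2 k L (reduce1 k L (rect_subsets L))) L'"
proof -
  have D: "rect_subsets L \<subseteq> Pow L"
    unfolding rect_subsets_def bounding_segs_def by auto
  show ?thesis
  proof
    assume m: "is_min_cover L (reduce1 k L (rect_subsets L)) L'"
    have c1: "is_cover L (reduce1 k L (rect_subsets L)) L'"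
      using m unfolding is_min_cover_def by blast
    have c2: "is_cover L (reduce2 k L (reduce1 k L (rect_subsets L))) L'"
      by (rule cover1_cover2[OF assms(1) D c1 assms(4)])
    have "card L' \<le> card L2" if "is_cover L (reduce2 k L (reduce1 k L (rect_subsets L))) L2" for L2
    proof -
      have "is_cover L (reduce1 k L (rect_subsets L)) L2" by (rule cover2_cover1[OF that])
      then show ?thesis using m unfolding is_min_cover_def by blast
    qed
    then show "is_min_cover L (reduce2 k L (reduce1 k L (rect_subsets L))) L'"
      using c2 unfolding is_min_cover_def by blast
  next
    assume m: "is_min_cover L (reduce2 k L (reduce1 k L (rect_subsets L))) L'"
    have c1: "is_cover L (reduce1 k L (rect_subsets L)) L'"
      using m cover2_cover1 unfolding is_min_cover_def by blast
    have "card L' \<le> card L2" if "is_cover L (reduce1 k L (rect_subsets L)) L2" for L2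
    proof (rule ccontr)
      assume "\<not> card L' \<le> card L2"
      then have "card L2 \<le> k" using assms(4) by simp
      then have "is_cover L (reduce2 k L (reduce1 k L (rect_subsets L))) L2"
        using cover1_cover2[OF assms(1) D that] by blast
      then show False using m \<open>\<not> card L' \<le> card L2\<close> unfolding is_min_cover_def by blast
    qed
    then show "is_min_cover L (reduce1 k L (rect_subsets L)) L'"
      using c1 unfolding is_min_cover_def by blast
  qed
qed

end
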